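(* Consider $1$-private $5$-server HSS for $\mathsf{CONCAT}_4(\mathbb{F}_2)$. (i) There is an $\mathbb{F}_2$-linear such HSS whose $\mathsf{Share}$ is $1$-private $5$-party CNF sharing over $\mathbb{F}_2$ and in which each server's output share is a single bit (download cost $5$ bits). (ii) There is no $\mathbb{F}_2$-linear such HSS in which each of the $4$ secrets in $\mathbb{F}_2$ is shared independently by $1$-private $5$-party Shamir sharing over $\mathbb{E}=\mathbb{F}_8$ (for any choice of distinct evaluation points $\alpha_0,\dots,\alpha_5\in\mathbb{F}_8$) and in which each server's output share is a single bit.
   Context: $\mathsf{CONCAT}_\ell(\mathcal{X})$: the class consisting of the identity map $\mathcal{X}^\ell\to\mathcal{X}^\ell$, with $\ell$ inputs each shared independently. A $k$-server HSS $(\mathsf{Share},\mathsf{Eval},\mathsf{Rec})$: randomized $\mathsf{Share}$ splits each input into $k$ shares; server $j$ computes its output share from its input shares; $\mathsf{Rec}$ of the output shares recovers the output with probability 1; $1$-private if each single server's input shares are distributed independently of the input. $\mathbb{F}_2$-linear: $\mathsf{Share}$ is $\mathbb{F}_2$-linear in the input and uniform random bits, output shares are vectors over $\mathbb{F}_2$, and $\mathsf{Rec}$ is $\mathbb{F}_2$-linear. $1$-private $k$-party CNF sharing of $x\in\mathbb{F}_2$: uniform $x_1,\dots,x_k\in\mathbb{F}_2$ with $\sum_ix_i=x$, party $j$ gets $(x_i)_{i\ne j}$. $1$-private Shamir sharing over $\mathbb{E}\supseteq\mathbb{F}_2$ with distinct $\alpha_0,\dots,\alpha_k\in\mathbb{E}$: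 random $p\in\mathbb{E}[X]$ with $\deg p\le1$ and $p(\alpha_0)=x$; party $j$ gets $p(\alpha_j)$. *)

theory Defs
  imports Main "HOL-Library.Z2" "HOL-Library.Numeral_Type" "HOL-Library.Function_Algebras"
begin

text \<open>F_2 is the field type bit from HOL-Library.Z2; we record that it is finite
  (needed so that uniform randomness over functions into bit makes sense).\<close>

instance bit :: finite
proof
  have "(UNIV :: bit set) = {0, 1}" by (auto intro: bit.exhaust)
  then show "finite (UNIV :: bit set)" by (metis finite.emptyI finite.insertI)
qed

text \<open>Inputs are indexed by the finite type 'l, servers by the finite type 'k.
  A sharing of one secret is given by a function
    Share :: bit => 'r => 'k => 's,
  where the randomness 'r is uniform over the finite type 'r (an F_2-vector
  space, i.e. an abelian group of characteristic 2 such as bit-vectors or F_8),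
  and Share x r j is the share of server j.  The l inputs are shared
  independently (independent randomness rho i for input i).
  Eval j maps server j's shares of all l inputs to its output share, here a
  single bit; Rec maps the k output bits to the l output bits.\<close>

definition share_linear :: "(bit \<Rightarrow> 'r::ab_group_add \<Rightarrow> 'k \<Rightarrow> 's::ab_group_add) \<Rightarrow> bool" where
  "share_linear Share \<longleftrightarrow>
     (\<forall>x x' r r' j. Share (x + x') (r + r') j = Share x r j + Share x' r' j)"

definition rec_linear :: "(('k \<Rightarrow> bit) \<Rightarrow> ('l \<Rightarrow> bit)) \<Rightarrow> bool" where
  "rec_linear Rec \<longleftrightarrow>
     (\<forall>y y'. Rec (y + y') = Rec y + Rec y') \<and>
     (\<forall>c y. Rec (\<lambda>j. c * y j) = (\<lambda>i. c * Rec y i))"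

definition hss_correct ::
  "(bit \<Rightarrow> 'r \<Rightarrow> 'k \<Rightarrow> 's) \<Rightarrow> ('k \<Rightarrow> ('l \<Rightarrow> 's) \<Rightarrow> bit) \<Rightarrow> (('k \<Rightarrow> bit) \<Rightarrow> ('l \<Rightarrow> bit)) \<Rightarrow> bool" where
  "hss_correct Share Eval Rec \<longleftrightarrow>
     (\<forall>(x :: 'l \<Rightarrow> bit) (\<rho> :: 'l \<Rightarrow> 'r).
        Rec (\<lambda>j. Eval j (\<lambda>i. Share (x i) (\<rho> i) j)) = x)"

text \<open>1-privacy: for each single server j, the distribution of its input shares
  (over uniform randomness) does not depend on the input.\<close>
definition hss_private1 :: "(bit \<Rightarrow> 'r::finite \<Rightarrow> 'k \<Rightarrow> 's) \<Rightarrow> ('l::finite) itself \<Rightarrow> bool" where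
  "hss_private1 Share _ \<longleftrightarrow>
     (\<forall>j (x :: 'l \<Rightarrow> bit) (x' :: 'l \<Rightarrow> bit) (v :: 'l \<Rightarrow> 's).
        card {\<rho> :: 'l \<Rightarrow> 'r. (\<lambda>i. Share (x i) (\<rho> i) j) = v} =
        card {\<rho> :: 'l \<Rightarrow> 'r. (\<lambda>i. Share (x' i) (\<rho> i) j) = v})"

definition lin_hss ::
  "(bit \<Rightarrow> 'r::{finite,ab_group_add} \<Rightarrow> 'k::finite \<Rightarrow> 's::ab_group_add)
   \<Rightarrow> ('k \<Rightarrow> ('l::finite \<Rightarrow> 's) \<Rightarrow> bit) \<Rightarrow> (('k \<Rightarrow> bit) \<Rightarrow> ('l \<Rightarrow> bit)) \<Rightarrow> bool" where
  "lin_hss Share Eval Rec \<longleftrightarrow>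
     hss_private1 Share TYPE('l) \<and> share_linear Share \<and> rec_linear Rec \<and>
     hss_correct Share Eval Rec"

text \<open>The randomness r :: 'k => bit is
  uniform; the additive shares are x_t = r t for t \<noteq> t0 and
  x_t0 = x + sum_{t \<noteq> t0} r t (the bit r t0 is unused), so (x_t)_t is uniform
  among tuples summing to x.  Server j receives (x_t)_{t \<noteq> j}, encoded as the
  function with the j-th entry set to 0.\<close>
definition cnf_add_shares :: "bit \<Rightarrow> ('k::finite \<Rightarrow> bit) \<Rightarrow> 'k \<Rightarrow> bit" where
  "cnf_add_shares x r t =
     (if t = undefined then x + (\<Sum>t'\<in>UNIV - {undefined}. r t') else r t)"

definition cnf_share :: "bit \<Rightarrow> ('k::finite \<Rightarrow> bit) \<Rightarrow> 'k \<Rightarrow> ('k \<Rightarrow> bit)" where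
  "cnf_share x r j = (\<lambda>t. if t = j then 0 else cnf_add_shares x r t)"

text \<open>1-private Shamir sharing over a field 'e \<supseteq> F_2 with evaluation points
  \<alpha>0 (secret) and \<alpha> j (server j): p(X) = x + b (X - \<alpha>0) with b uniform in 'e,
  which is uniform among polynomials of degree \<le> 1 with p(\<alpha>0) = x.\<close>
definition shamir_share :: "'e::field \<Rightarrow> ('k \<Rightarrow> 'e) \<Rightarrow> bit \<Rightarrow> 'e \<Rightarrow> 'k \<Rightarrow> 'e" where
  "shamir_share \<alpha>0 \<alpha> x b j = of_bit x + b * (\<alpha> j - \<alpha>0)"

end

theory Submission
  imports Defs "HOL-Library.Cardinality"
begin

lemma bit_add_self[simp]: "(a::bit) + a = 0"
  by (cases a rule: bit.exhaust) auto

lemma fun_add_self[simp]: "(w::'a \<Rightarrow> bit) + w = 0"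
  by (rule ext) simp

lemma card_bit: "CARD(bit) = 2"
proof -
  have "(UNIV :: bit set) = {0, 1}" by (auto intro: bit.exhaust)
  moreover have "card {0::bit, 1} = 2" by simp
  ultimately show ?thesis by simp
qed

lemma bit_cases01: "(a::bit) = 0 \<or> a = 1"
  by (cases a rule: bit.exhaust) auto

lemma bit_eq_add: "((a::bit) + b = c) = (b = a + c)"
  using bit_cases01[of a] bit_cases01[of b] bit_cases01[of c] by auto

lemma fun_add_eq0: "(w::'a \<Rightarrow> bit) + w' = 0 \<Longrightarrow> w = w'"
proof -
  assume "w + w' = 0"
  then have "\<forall>j. w j + w' j = 0" by (metis plus_fun_apply zero_fun_apply)
  then have "w j = w' j" for j by (metis bit_eq_add add.right_neutral)
  then show ?thesis by (intro ext)
qed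

lemma bit_plus11: "(a::bit) + c = (a + 1) + (c + 1)"
  using bit_cases01[of a] bit_cases01[of c] by auto

lemma bit4: "(a::bit) + b = c + d \<Longrightarrow> a + c = b + d"
  using bit_cases01[of a] bit_cases01[of b] bit_cases01[of c] bit_cases01[of d] by auto

lemma core:
  fixes Rec :: "(5 \<Rightarrow> bit) \<Rightarrow> (4 \<Rightarrow> bit)" and G :: "5 \<Rightarrow> (4 \<Rightarrow> 'e::{field,finite}) \<Rightarrow> bit"
    and \<delta> :: "5 \<Rightarrow> 'e"
  assumes add: "\<And>y y'. Rec (y + y') = Rec y + Rec y'"
    and corr: "\<And>x b. Rec (\<lambda>j. G j (\<lambda>i. b i + \<delta> j * of_bit (x i))) = x"
    and cardE: "CARD('e) = 8"
  shows False
proof -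
  define Y where "Y x b = (\<lambda>j. G j (\<lambda>i. b i + \<delta> j * of_bit (x i)))"
    for x :: "4 \<Rightarrow> bit" and b :: "4 \<Rightarrow> 'e"
  have RY: "Rec (Y x b) = x" for x b using corr unfolding Y_def .
  have Y0: "Y 0 b = (\<lambda>j. G j b)" for b unfolding Y_def by simp
  have R0: "Rec 0 = 0" using add[of 0 0] by simp
  have Rsub: "Rec (Y x b + Y x b') = 0" for x b b' by (simp add: add RY)
  have span: "\<exists>x \<epsilon>. w = Y x 0 + (if \<epsilon> then d else 0)"
    if dnz: "d \<noteq> 0" and dk: "Rec d = 0" for d w
  proof -
    define f where "f p = Y (fst p) 0 + (if snd p then d else 0)" for p :: "(4 \<Rightarrow> bit) \<times> bool"
    have inj: "inj f"
    proof (rule injI)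
      fix p q assume eq: "f p = f q"
      have Rf: "Rec (f p) = fst p" for p
        by (simp add: f_def add RY dk R0)
      have "fst p = fst q" using Rf[of p] Rf[of q] eq by simp
      moreover have "snd p = snd q"
      proof (rule ccontr)
        assume "snd p \<noteq> snd q"
        then have "d = 0" using eq \<open>fst p = fst q\<close>
          by (cases "snd p"; cases "snd q"; auto simp: f_def)
        with dnz show False by simp
      qed
      ultimately show "p = q" by (simp add: prod_eq_iff)
    qed
    have "card (range f) = CARD((4 \<Rightarrow> bit) \<times> bool)"
      using inj by (simp add: card_image)
    also have "\<dots> = CARD(5 \<Rightarrow> bit)" by (simp add: card_fun card_bit)
    finally have "range f = UNIV"
      by (simp add: card_subset_eq)
    then obtain p where "w = f p" by (metis UNIV_I imageE)
    then show ?thesis unfolding f_def by blast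
  qed
  have kern: "d' = 0 \<or> d' = d" if h1: "d \<noteq> 0" and h2: "Rec d = 0" and h3: "Rec d' = 0" for d d'
  proof -
    obtain x \<epsilon> where e: "Y 0 0 + d' = Y x 0 + (if \<epsilon> then d else 0)"
      using span[OF h1 h2] by blast
    have "Rec (Y 0 0 + d') = Rec (Y x 0 + (if \<epsilon> then d else 0))" using e by simp
    then have "x = 0" by (cases \<epsilon>) (simp_all add: add RY h2 h3 R0)
    with e show ?thesis by (cases \<epsilon>) auto
  qed
  have S4: "\<exists>x b b'. Y x b \<noteq> Y x b'"
  proof (rule ccontr)
    assume "\<not> ?thesis"
    then have all: "Y x b = Y x b'" for x b b' by blast
    have Gc: "G j c = G j 0" for j c using fun_cong[OF all[of 0 c 0], of j] by (simp add: Y0)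
    have "Y x b = (\<lambda>j. G j 0)" for x b unfolding Y_def by (intro ext) (rule Gc)
    then have xr: "x = Rec (\<lambda>j. G j 0)" for x using RY by metis
    have "(0::4\<Rightarrow>bit) = (\<lambda>_. 1)" using xr[of 0] xr[of "\<lambda>_. 1"] by simp
    then show False by (metis zero_fun_apply zero_neq_one)
  qed
  from S4 obtain x0 b0 b0' where ne: "Y x0 b0 \<noteq> Y x0 b0'" by blast
  define d0 where "d0 = Y x0 b0 + Y x0 b0'"
  have d0nz: "d0 \<noteq> 0" using ne fun_add_eq0 unfolding d0_def by metis
  have d0k: "Rec d0 = 0" using Rsub d0_def by simp
  have d0one: "d0 j = 1" for j
  proof (rule ccontr)
    assume "d0 j \<noteq> 1"
    then have dj: "d0 j = 0" using bit_cases01 by blast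
    have eqj: "Y x b j = Y x b' j" for x b b'
    proof -
      have "Y x b + Y x b' = 0 \<or> Y x b + Y x b' = d0"
        using kern[OF d0nz d0k Rsub] .
      then have "Y x b j + Y x b' j = 0"
        by (metis dj plus_fun_apply zero_fun_apply)
      then show ?thesis by (metis bit_eq_add add.right_neutral)
    qed
    have Gc: "G j c = G j 0" for c using eqj[of 0 c 0] by (simp add: Y0)
    have Yj: "Y x b j = G j 0" for x b unfolding Y_def by (rule Gc)
    obtain x \<epsilon> where e: "(\<lambda>_. G j 0 + 1) = Y x 0 + (if \<epsilon> then d0 else 0)"
      using span[OF d0nz d0k] by blast
    have "G j 0 + 1 = (Y x 0 + (if \<epsilon> then d0 else 0)) j" using fun_cong[OF e, of j] by (simp only:)
    then have "G j 0 + 1 = G j 0"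
      by (cases \<epsilon>) (simp_all only: plus_fun_apply zero_fun_apply Yj dj if_True if_False add.right_neutral)
    then have "(1::bit) = G j 0 + G j 0" by (metis bit_eq_add)
    then show False by simp
  qed
  define one where "one = (\<lambda>_::5. 1::bit)"
  have d0eq: "d0 = one" unfolding one_def using d0one by auto
  have onenz: "one \<noteq> 0" unfolding one_def by (metis zero_fun_apply zero_neq_one)
  have onek: "Rec one = 0" using d0k d0eq by simp
  have kern1: "d' = 0 \<or> d' = one" if "Rec d' = 0" for d'
    using kern[OF onenz onek that] .
  have S6: "Y x b j + Y x b k = Y x b' j + Y x b' k" for x b b' j k
  proof -
    have "Y x b + Y x b' = 0 \<or> Y x b + Y x b' = one" using kern1 Rsub by blast
    then show ?thesis
    proof
      assume "Y x b + Y x b' = 0" then show ?thesis using fun_add_eq0 by metis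
    next
      assume "Y x b + Y x b' = one"
      then have "\<And>l. Y x b l + Y x b' l = 1" unfolding one_def by (metis plus_fun_apply)
      then have "\<And>l. Y x b' l = Y x b l + 1" by (metis bit_eq_add)
      then have e1: "Y x b' j = Y x b j + 1" and e2: "Y x b' k = Y x b k + 1" by blast+
      show ?thesis unfolding e1 e2 by (rule bit_plus11)
    qed
  qed
  define H where "H c = G 0 c" for c
  define \<gamma> where "\<gamma> j = \<delta> j - \<delta> 0" for j
  define P where "P j x = Y x 0 0 + Y x 0 j" for j x
  have pairG: "G 0 c + G j c = P j 0" for j c
    using S6[where x=0 and b=c and b'=0 and j=0 and k=j] unfolding P_def by (simp add: Y0)
  have step: "H (\<lambda>i. c i + \<gamma> j * of_bit (x i)) = H c + (P j x + P j 0)" for c j x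
  proof -
    define b where "b i = c i - \<delta> 0 * of_bit (x i)" for i
    have e0: "Y x b 0 = G 0 c" unfolding Y_def b_def by simp
    have ej: "Y x b j = G j (\<lambda>i. c i + \<gamma> j * of_bit (x i))"
      unfolding Y_def b_def \<gamma>_def by (simp add: algebra_simps)
    define cc where "cc = (\<lambda>i. c i + \<gamma> j * of_bit (x i))"
    have gj: "G j cc = H cc + P j 0" unfolding H_def by (rule bit_eq_add[THEN iffD1, OF pairG[where j=j and c=cc]])
    have "Y x b 0 + Y x b j = P j x" using S6[where x=x and b=b and b'=0 and j=0 and k=j] unfolding P_def .
    then have "G 0 c + (H cc + P j 0) = P j x" unfolding e0 ej cc_def[symmetric] gj .
    then have "H cc + P j 0 = G 0 c + P j x" by (rule bit_eq_add[THEN iffD1])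
    then have "P j 0 + H cc = G 0 c + P j x" by (simp only: add.commute)
    then have "H cc = P j 0 + (G 0 c + P j x)" by (rule bit_eq_add[THEN iffD1])
    then show ?thesis unfolding cc_def[symmetric] H_def by (simp only: ac_simps)
  qed
  have tele: "\<forall>c. H (\<lambda>i. c i + (\<Sum>j\<in>T. \<gamma> j) * of_bit (x i)) = H c + (\<Sum>j\<in>T. P j x + P j 0)"
    if "finite T" for T x
    using that
  proof (induction T rule: finite_induct)
    case empty then show ?case by simp
  next
    case (insert t T)
    show ?case
    proof
      fix c
      have "H (\<lambda>i. c i + (\<Sum>j\<in>insert t T. \<gamma> j) * of_bit (x i))
          = H (\<lambda>i. (c i + (\<Sum>j\<in>T. \<gamma> j) * of_bit (x i)) + \<gamma> t * of_bit (x i))"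
        using insert.hyps by (simp add: algebra_simps)
      also have "\<dots> = H (\<lambda>i. c i + (\<Sum>j\<in>T. \<gamma> j) * of_bit (x i)) + (P t x + P t 0)"
        by (rule step)
      also have "\<dots> = H c + (\<Sum>j\<in>T. P j x + P j 0) + (P t x + P t 0)"
        by (simp only: insert.IH)
      also have "\<dots> = H c + (\<Sum>j\<in>insert t T. P j x + P j 0)"
        by (simp only: sum.insert[OF insert.hyps] ac_simps)
      finally show "H (\<lambda>i. c i + (\<Sum>j\<in>insert t T. \<gamma> j) * of_bit (x i)) = H c + (\<Sum>j\<in>insert t T. P j x + P j 0)" .
    qed
  qed
  define A where "A = Pow (UNIV - {0::5})"
  have "card A = 16" unfolding A_def by (simp add: card_Pow)
  moreover have "card ((\<lambda>T. \<Sum>j\<in>T. \<gamma> j) ` A) \<le> 8"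
    using card_mono[of "UNIV::'e set"] cardE by simp
  ultimately have "\<not> inj_on (\<lambda>T. \<Sum>j\<in>T. \<gamma> j) A"
    by (intro pigeonhole) simp
  then obtain T1 T2 where T1: "T1 \<in> A" and T2: "T2 \<in> A" and T12: "T1 \<noteq> T2"
    and seq: "(\<Sum>j\<in>T1. \<gamma> j) = (\<Sum>j\<in>T2. \<gamma> j)"
    unfolding inj_on_def by blast
  have sumeq: "(\<Sum>j\<in>T1. P j x + P j 0) = (\<Sum>j\<in>T2. P j x + P j 0)" for x
  proof -
    note e1 = tele[of T1 x, OF finite, rule_format, of 0]
    note e2 = tele[of T2 x, OF finite, rule_format, of 0]
    have "H 0 + (\<Sum>j\<in>T1. P j x + P j 0) = H 0 + (\<Sum>j\<in>T2. P j x + P j 0)"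
      using e1[unfolded seq] e2 by (rule trans[OF sym])
    then show ?thesis by (simp only: add_left_cancel)
  qed
  define \<phi> where "\<phi> w = (\<Sum>j\<in>T1. w 0 + w j) + (\<Sum>j\<in>T2. w 0 + w j)" for w :: "5 \<Rightarrow> bit"
  have phiY: "\<phi> (Y x 0) = \<phi> (Y 0 0)" for x
  proof -
    have a: "\<phi> (Y x 0) = (\<Sum>j\<in>T1. P j x) + (\<Sum>j\<in>T2. P j x)" for x
      unfolding \<phi>_def P_def by (rule refl)
    have "(\<Sum>j\<in>T1. P j x) + (\<Sum>j\<in>T1. P j 0) = (\<Sum>j\<in>T2. P j x) + (\<Sum>j\<in>T2. P j 0)"
      using sumeq[of x] by (simp only: sum.distrib)
    then have "(\<Sum>j\<in>T1. P j x) + (\<Sum>j\<in>T2. P j x) = (\<Sum>j\<in>T1. P j 0) + (\<Sum>j\<in>T2. P j 0)"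
      by (rule bit4)
    then show ?thesis by (simp only: a)
  qed
  have phione: "\<phi> (w + (if \<epsilon> then one else 0)) = \<phi> w" for w \<epsilon>
    unfolding \<phi>_def one_def
    by (cases \<epsilon>) (simp_all only: if_True if_False add_0_right plus_fun_apply bit_plus11[symmetric])
  have phiall: "\<phi> w = \<phi> (Y 0 0)" for w
  proof -
    obtain x \<epsilon> where "w = Y x 0 + (if \<epsilon> then one else 0)" using span[OF onenz onek] by blast
    then have "\<phi> w = \<phi> (Y x 0)" by (simp only: phione)
    then show ?thesis using phiY[of x] by (rule trans)
  qed
  have phi0: "\<phi> 0 = 0" unfolding \<phi>_def by (simp only: zero_fun_apply add_0_right sum.neutral_const)
  obtain j where jT: "(j \<in> T1) \<noteq> (j \<in> T2)" using T12 by blast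
  have j0: "j \<noteq> 0" using jT T1 T2 unfolding A_def by blast
  define w where "w = (\<lambda>k. if k = j then 1 else (0::bit))"
  have w0: "w 0 = 0" unfolding w_def using j0 by simp
  have "\<phi> w = (if j \<in> T1 then 1 else 0) + (if j \<in> T2 then 1 else 0)"
    unfolding \<phi>_def w0 add_0_left unfolding w_def by (simp only: sum.delta finite)
  also have "\<dots> = 1" using jT by (cases "j \<in> T1") simp_all
  finally have "\<phi> w = 1" .
  moreover have "\<phi> w = 0" using phiall[of w] phiall[of 0] phi0 by (simp only:)
  ultimately show False by simp
qed

declare add_bit_eq_xor[simp del] mult_bit_eq_and[simp del]

lemma sum_bit_upd: "(\<Sum>t\<in>A. (r(j := r j + d)) t) = (\<Sum>t\<in>A. r t) + d"
  if "finite A" "j \<in> A" for r :: "'a \<Rightarrow> bit"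
proof -
  have "(\<Sum>t\<in>A. (r(j := r j + d)) t) = (\<Sum>t\<in>A. r t + (if t = j then d else 0))"
    by (rule sum.cong) auto
  also have "\<dots> = (\<Sum>t\<in>A. r t) + d" using that by (simp add: sum.distrib)
  finally show ?thesis .
qed

lemma cnf_sum: "(\<Sum>t\<in>UNIV. cnf_add_shares x r t) = x"
proof -
  let ?u = "undefined :: 'a::finite"
  have "(\<Sum>t\<in>UNIV. cnf_add_shares x r t) = cnf_add_shares x r ?u + (\<Sum>t\<in>UNIV - {?u}. cnf_add_shares x r t)"
    by (rule sum.remove) auto
  also have "(\<Sum>t\<in>UNIV - {?u}. cnf_add_shares x r t) = (\<Sum>t\<in>UNIV - {?u}. r t)"
    by (rule sum.cong) (auto simp: cnf_add_shares_def)
  finally show ?thesis by (simp add: cnf_add_shares_def add.assoc)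
qed

lemma cnf_flip: "cnf_share x (r(j := r j + (x + x'))) j = cnf_share x' r j"
  for r :: "'a::finite \<Rightarrow> bit"
proof (rule ext)
  fix t
  show "cnf_share x (r(j := r j + (x + x'))) j t = cnf_share x' r j t"
  proof (cases "t = j")
    case True then show ?thesis by (simp add: cnf_share_def)
  next
    case tj: False
    show ?thesis
    proof (cases "t = undefined")
      case True
      then have ju: "j \<in> UNIV - {undefined}" using tj by auto
      have "x + (\<Sum>t'\<in>UNIV - {undefined}. (r(j := r j + (x + x'))) t') = x' + (\<Sum>t'\<in>UNIV - {undefined}. r t')"
        by (simp only: sum_bit_upd[OF finite ju]) (simp add: ac_simps)
      then show ?thesis using tj True by (simp add: cnf_share_def cnf_add_shares_def)
    next
      case False then show ?thesis using tj by (simp add: cnf_share_def cnf_add_shares_def)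
    qed
  qed
qed

lemma cnf_flip': "cnf_share x (r(j := r j + (x' + x))) j = cnf_share x' r j"
  for r :: "'a::finite \<Rightarrow> bit"
  using cnf_flip[of x r j x'] by (simp only: add.commute)

lemma bit_cancel: "(a::bit) + b + (c + b) = a + c"
  using bit_cases01[of a] bit_cases01[of b] bit_cases01[of c] by auto

lemma sum_ite0: "(\<Sum>t\<in>UNIV. if t = j then 0 else f t) = (\<Sum>t\<in>UNIV. f t) + f j"
  for f :: "'a::finite \<Rightarrow> bit"
proof -
  have "(\<Sum>t\<in>UNIV. if t = j then 0 else f t) + f j
     = (\<Sum>t\<in>UNIV. (if t = j then 0 else f t) + (if t = j then f t else 0))"
    by (simp add: sum.distrib)
  also have "\<dots> = (\<Sum>t\<in>UNIV. f t)" by (rule sum.cong) auto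
  finally have "f j + (\<Sum>t\<in>UNIV. if t = j then 0 else f t) = (\<Sum>t\<in>UNIV. f t)"
    by (simp only: add.commute)
  then have "(\<Sum>t\<in>UNIV. if t = j then 0 else f t) = f j + (\<Sum>t\<in>UNIV. f t)"
    by (rule bit_eq_add[THEN iffD1])
  then show ?thesis by (simp only: add.commute)
qed

lemma part1:
  "\<exists>(Eval :: 5 \<Rightarrow> (4 \<Rightarrow> (5 \<Rightarrow> bit)) \<Rightarrow> bit) (Rec :: (5 \<Rightarrow> bit) \<Rightarrow> (4 \<Rightarrow> bit)).
            lin_hss (cnf_share :: bit \<Rightarrow> (5 \<Rightarrow> bit) \<Rightarrow> 5 \<Rightarrow> (5 \<Rightarrow> bit)) Eval Rec"
proof -
  obtain m :: 5 where True by blast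
  have "card (UNIV - {m}) = CARD(4)" by (simp add: card_Diff_singleton)
  then obtain emb :: "4 \<Rightarrow> 5" where bij: "bij_betw emb UNIV (UNIV - {m})"
    by (metis finite finite_same_card_bij)
  have embm: "emb i \<noteq> m" for i using bij by (auto simp: bij_betw_def)
  have embinj: "(emb i = emb i') = (i = i')" for i i' using bij by (auto simp: bij_betw_def inj_on_def)
  define emb' where "emb' = inv emb"
  have embinv: "emb' (emb i) = i" for i unfolding emb'_def using bij
    by (metis bij_betw_imp_inj_on inv_f_f)
  define Eval :: "5 \<Rightarrow> (4 \<Rightarrow> (5 \<Rightarrow> bit)) \<Rightarrow> bit" where
    "Eval j s = (if j = m then 0 else (\<Sum>t\<in>UNIV. s (emb' j) t)) + (\<Sum>i\<in>UNIV. s i (emb i))" for j s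
  define Rec :: "(5 \<Rightarrow> bit) \<Rightarrow> (4 \<Rightarrow> bit)" where "Rec y = (\<lambda>i. y (emb i) + y m)" for y
  have lin: "share_linear (cnf_share :: bit \<Rightarrow> (5 \<Rightarrow> bit) \<Rightarrow> 5 \<Rightarrow> (5 \<Rightarrow> bit))"
    unfolding share_linear_def
  proof (intro allI)
    fix x x' :: bit and r r' :: "5 \<Rightarrow> bit" and j :: 5
    show "cnf_share (x + x') (r + r') j = cnf_share x r j + cnf_share x' r' j"
      by (rule ext) (simp add: cnf_share_def cnf_add_shares_def sum.distrib ac_simps)
  qed
  have rl: "rec_linear Rec"
    unfolding rec_linear_def Rec_def by (auto simp: fun_eq_iff ac_simps distrib_left)
  have corr: "hss_correct cnf_share Eval Rec"
    unfolding hss_correct_def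
  proof (intro allI)
    fix x :: "4 \<Rightarrow> bit" and \<rho> :: "4 \<Rightarrow> 5 \<Rightarrow> bit"
    define a where "a i t = cnf_add_shares (x i) (\<rho> i) t" for i t
    define S where "S = (\<Sum>i\<in>UNIV. a i (emb i))"
    have sh: "cnf_share (x i) (\<rho> i) j = (\<lambda>t. if t = j then 0 else a i t)" for i j
      unfolding cnf_share_def a_def ..
    have A: "(\<Sum>t\<in>UNIV. if t = j then 0 else a i t) = x i + a i j" for i j
      unfolding sum_ite0 a_def cnf_sum ..
    have Bm: "(\<Sum>i\<in>UNIV. if emb i = m then 0 else a i (emb i)) = S"
      unfolding S_def using embm by simp
    have Be: "(\<Sum>i\<in>UNIV. if emb i = emb i0 then 0 else a i (emb i)) = S + a i0 (emb i0)" for i0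
      unfolding S_def embinj using sum_ite0[of i0 "\<lambda>i. a i (emb i)"] by simp
    have ym: "Eval m (\<lambda>i. cnf_share (x i) (\<rho> i) m) = S"
      unfolding Eval_def sh using Bm by simp
    have ye: "Eval (emb i0) (\<lambda>i. cnf_share (x i) (\<rho> i) (emb i0)) = x i0 + S" for i0
    proof -
      have "Eval (emb i0) (\<lambda>i. cnf_share (x i) (\<rho> i) (emb i0)) = (x i0 + a i0 (emb i0)) + (S + a i0 (emb i0))"
        unfolding Eval_def sh embinv using embm[of i0] A Be by simp
      also have "\<dots> = x i0 + S" by (rule bit_cancel)
      finally show ?thesis .
    qed
    show "Rec (\<lambda>j. Eval j (\<lambda>i. cnf_share (x i) (\<rho> i) j)) = x"
      unfolding Rec_def ym ye by (rule ext) (simp add: add.assoc)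
  qed
  have priv: "hss_private1 (cnf_share :: bit \<Rightarrow> (5 \<Rightarrow> bit) \<Rightarrow> 5 \<Rightarrow> (5 \<Rightarrow> bit)) TYPE(4)"
    unfolding hss_private1_def
  proof (intro allI)
    fix j :: 5 and x x' :: "4 \<Rightarrow> bit" and v :: "4 \<Rightarrow> 5 \<Rightarrow> bit"
    define \<tau> :: "(4 \<Rightarrow> 5 \<Rightarrow> bit) \<Rightarrow> (4 \<Rightarrow> 5 \<Rightarrow> bit)" where
      "\<tau> \<rho> = (\<lambda>i. (\<rho> i)(j := \<rho> i j + (x i + x' i)))" for \<rho>
    have tt: "\<tau> (\<tau> \<rho>) = \<rho>" for \<rho>
      unfolding \<tau>_def by (rule ext)+ (simp add: add.assoc)
    have inj: "inj \<tau>" by (metis injI tt)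
    have v1: "(\<lambda>i. cnf_share (x i) (\<tau> \<rho> i) j) = (\<lambda>i. cnf_share (x' i) (\<rho> i) j)" for \<rho>
      unfolding \<tau>_def by (rule ext) (rule cnf_flip)
    have v2: "(\<lambda>i. cnf_share (x' i) (\<tau> \<rho> i) j) = (\<lambda>i. cnf_share (x i) (\<rho> i) j)" for \<rho>
      unfolding \<tau>_def by (rule ext) (rule cnf_flip')
    have "{\<rho>. (\<lambda>i. cnf_share (x i) (\<rho> i) j) = v} = \<tau> ` {\<rho>. (\<lambda>i. cnf_share (x' i) (\<rho> i) j) = v}"
    proof
      show "\<tau> ` {\<rho>. (\<lambda>i. cnf_share (x' i) (\<rho> i) j) = v} \<subseteq> {\<rho>. (\<lambda>i. cnf_share (x i) (\<rho> i) j) = v}"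
        using v1 by auto
      show "{\<rho>. (\<lambda>i. cnf_share (x i) (\<rho> i) j) = v} \<subseteq> \<tau> ` {\<rho>. (\<lambda>i. cnf_share (x' i) (\<rho> i) j) = v}"
      proof
        fix \<rho> assume "\<rho> \<in> {\<rho>. (\<lambda>i. cnf_share (x i) (\<rho> i) j) = v}"
        then have "\<tau> \<rho> \<in> {\<rho>. (\<lambda>i. cnf_share (x' i) (\<rho> i) j) = v}" using v2 by simp
        then show "\<rho> \<in> \<tau> ` {\<rho>. (\<lambda>i. cnf_share (x' i) (\<rho> i) j) = v}" by (rule image_eqI[rotated]) (rule tt[symmetric])
      qed
    qed
    then show "card {\<rho> :: 4 \<Rightarrow> 5 \<Rightarrow> bit. (\<lambda>i. cnf_share (x i) (\<rho> i) j) = v} =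
        card {\<rho> :: 4 \<Rightarrow> 5 \<Rightarrow> bit. (\<lambda>i. cnf_share (x' i) (\<rho> i) j) = v}"
      using inj by (simp add: card_image inj_on_subset)
  qed
  show ?thesis unfolding lin_hss_def using priv lin rl corr by blast
qed

lemma part2:
  fixes \<alpha>0 :: "'e::{field,finite}" and \<alpha> :: "5 \<Rightarrow> 'e"
  assumes card: "CARD('e) = 8" and a0: "\<alpha>0 \<notin> range \<alpha>"
    and h: "lin_hss (shamir_share \<alpha>0 \<alpha>) (Eval :: 5 \<Rightarrow> (4 \<Rightarrow> 'e) \<Rightarrow> bit) (Rec :: (5 \<Rightarrow> bit) \<Rightarrow> (4 \<Rightarrow> bit))"
  shows False
proof -
  have add: "\<And>y y'. Rec (y + y') = Rec y + Rec y'" using h unfolding lin_hss_def rec_linear_def by blast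
  have c: "\<And>x \<rho>. Rec (\<lambda>j. Eval j (\<lambda>i. shamir_share \<alpha>0 \<alpha> (x i) (\<rho> i) j)) = x"
    using h unfolding lin_hss_def hss_correct_def by blast
  have nz: "\<alpha> j - \<alpha>0 \<noteq> 0" for j using a0 by auto
  define G where "G j c = Eval j (\<lambda>i. c i * (\<alpha> j - \<alpha>0))" for j and c :: "4 \<Rightarrow> 'e"
  define \<delta> where "\<delta> j = inverse (\<alpha> j - \<alpha>0)" for j
  have eq: "G j (\<lambda>i. b i + \<delta> j * of_bit (x i)) = Eval j (\<lambda>i. shamir_share \<alpha>0 \<alpha> (x i) (b i) j)" for j b x
  proof -
    have pt: "(b i + \<delta> j * of_bit (x i)) * (\<alpha> j - \<alpha>0) = of_bit (x i) + b i * (\<alpha> j - \<alpha>0)" for i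
    proof -
      have "\<delta> j * of_bit (x i) * (\<alpha> j - \<alpha>0) = of_bit (x i)"
        unfolding \<delta>_def using nz[of j] by (metis mult.commute mult.left_commute mult_1_right right_inverse)
      then show ?thesis by (simp only: distrib_right add.commute)
    qed
    show ?thesis unfolding G_def shamir_share_def pt ..
  qed
  show False
    by (rule core[of Rec G \<delta>, OF add _ card]) (simp only: eq c)
qed

theorem mainTheorem19:
  shows "(\<exists>(Eval :: 5 \<Rightarrow> (4 \<Rightarrow> (5 \<Rightarrow> bit)) \<Rightarrow> bit) (Rec :: (5 \<Rightarrow> bit) \<Rightarrow> (4 \<Rightarrow> bit)).
            lin_hss (cnf_share :: bit \<Rightarrow> (5 \<Rightarrow> bit) \<Rightarrow> 5 \<Rightarrow> (5 \<Rightarrow> bit)) Eval Rec)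
       \<and> (\<forall>(\<alpha>0 :: 'e::{field,finite}) (\<alpha> :: 5 \<Rightarrow> 'e).
            CARD('e) = 8 \<longrightarrow> inj \<alpha> \<longrightarrow> \<alpha>0 \<notin> range \<alpha> \<longrightarrow>
            \<not> (\<exists>(Eval :: 5 \<Rightarrow> (4 \<Rightarrow> 'e) \<Rightarrow> bit) (Rec :: (5 \<Rightarrow> bit) \<Rightarrow> (4 \<Rightarrow> bit)).
                 lin_hss (shamir_share \<alpha>0 \<alpha>) Eval Rec))"
  using part1 part2 by blast

end
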